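(* Let $\alpha<1$ be a real number and $k\ge 2$ an integer. Let $A\subset\mathbb{N}$ be such that $A(X)\le C\frac{\sqrt{X}}{(\log X)^{\alpha}}$ for some constant $C>0$ and all sufficiently large $X$. Then there is a constant $C'>0$ such that for all sufficiently large $X$, $$A^k(X)\le C'\sqrt{X}(\log X)^{k-1-k\alpha}.$$
   Context: $\mathbb{N}$ is the set of positive integers; $A^1=A$, $A^k=AA^{k-1}$ where $AB=\{ab:a\in A,b\in B\}$; for $S\subset\mathbb{N}_0$, $S(X)=|S\cap[1,X]|$. *)

theory Defs
  imports Complex_Main
begin

definition set_mult :: "nat set \<Rightarrow> nat set \<Rightarrow> nat set" where
  "set_mult A B = {a * b | a b. a \<in> A \<and> b \<in> B}"

fun set_pow :: "nat set \<Rightarrow> nat \<Rightarrow> nat set" where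
  "set_pow A 0 = {1}"
| "set_pow A (Suc k) = set_mult A (set_pow A k)"

definition count_upto :: "nat set \<Rightarrow> real \<Rightarrow> nat" where
  "count_upto S X = card {n \<in> S. 1 \<le> n \<and> real n \<le> X}"

end

theory Submission imports Defs "HOL-Library.Discrete_Functions" begin

lemma tele_step:
  fixes \<alpha> :: real and i :: nat
  assumes "0 \<le> \<alpha>" "\<alpha> < 1"
  shows "real (i+1) powr (-\<alpha>) \<le> (real (i+1) powr (1-\<alpha>) - real i powr (1-\<alpha>)) / (1-\<alpha>)"
proof (cases "i = 0")
  case True
  then show ?thesis using assms by (simp add: field_simps)
next
  case False
  hence ipos: "real i > 0" by simp
  have "\<exists>z. real i < z \<and> z < real (i+1) \<and>
     (real (i+1) powr (1-\<alpha>) - real i powr (1-\<alpha>)) = (real (i+1) - real i) * ((1-\<alpha>) * z powr (1-\<alpha>-1))"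
    apply (rule MVT2) apply simp
    apply (rule has_real_derivative_powr) using ipos by linarith
  then obtain z where z: "real i < z" "z < real (i+1)"
    "real (i+1) powr (1-\<alpha>) - real i powr (1-\<alpha>) = (1-\<alpha>) * z powr (-\<alpha>)" by auto
  have "real (i+1) powr (-\<alpha>) \<le> z powr (-\<alpha>)"
    apply (rule powr_mono2') using z ipos assms by auto
  hence "(1-\<alpha>) * real (i+1) powr (-\<alpha>) \<le> (1-\<alpha>) * z powr (-\<alpha>)"
    using assms by (intro mult_left_mono) auto
  then show ?thesis using z assms by (simp add: pos_le_divide_eq mult.commute)
qed

lemma tele_sum:
  fixes \<alpha> :: real
  assumes "0 \<le> \<alpha>" "\<alpha> < 1"
  shows "(\<Sum>i<J. real (i+1) powr (-\<alpha>)) \<le> real J powr (1-\<alpha>) / (1-\<alpha>)"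
proof (induction J)
  case 0 then show ?case by simp
next
  case (Suc J)
  have "(\<Sum>i<Suc J. real (i+1) powr (-\<alpha>)) = (\<Sum>i<J. real (i+1) powr (-\<alpha>)) + real (J+1) powr (-\<alpha>)" by simp
  also have "\<dots> \<le> real J powr (1-\<alpha>) / (1-\<alpha>) + (real (J+1) powr (1-\<alpha>) - real J powr (1-\<alpha>)) / (1-\<alpha>)"
    using Suc tele_step[OF assms, of J] by linarith
  also have "\<dots> = real (Suc J) powr (1-\<alpha>) / (1-\<alpha>)"
    by (simp add: diff_divide_distrib)
  finally show ?case .
qed

lemma powr_sum_bound:
  fixes \<alpha> :: real
  assumes "\<alpha> < 1"
  shows "\<exists>c>0. \<forall>J. (\<Sum>i<J. real (i+1) powr (-\<alpha>)) \<le> c * real J powr (1-\<alpha>)"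
proof (cases "0 \<le> \<alpha>")
  case True
  then show ?thesis using tele_sum[OF True assms] assms
    by (intro exI[of _ "1/(1-\<alpha>)"]) auto
next
  case False
  show ?thesis
  proof (intro exI[of _ 1] conjI allI)
    fix J :: nat
    show "(\<Sum>i<J. real (i+1) powr (-\<alpha>)) \<le> 1 * real J powr (1-\<alpha>)"
    proof (cases "J = 0")
      case True then show ?thesis by simp
    next
      case J: False
      have "(\<Sum>i<J. real (i+1) powr (-\<alpha>)) \<le> (\<Sum>i<J. real J powr (-\<alpha>))"
        apply (rule sum_mono) apply (rule powr_mono2) using False by auto
      also have "\<dots> = real J * real J powr (-\<alpha>)" by simp
      also have "\<dots> = real J powr (1-\<alpha>)" using J
        by (simp add: powr_diff powr_minus_divide)
      finally show ?thesis by simp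
    qed
  qed simp
qed


lemma finite_upto: "finite {n\<in>S. 1 \<le> n \<and> real n \<le> X}"
proof -
  have "{n\<in>S. 1 \<le> n \<and> real n \<le> X} \<subseteq> {..nat \<lfloor>X\<rfloor>}"
    by (auto simp: le_nat_floor)
  then show ?thesis using finite_subset by blast
qed

lemma inner_bound:
  assumes "0 \<notin> A"
  shows "(\<Sum>a\<in>{x\<in>{n\<in>A. 1 \<le> n \<and> real n \<le> X}. floor_log x = y}. 1 / sqrt (real a))
        \<le> real (count_upto A (2^(y+1))) / sqrt (2^y)"
proof -
  let ?B = "{x\<in>{n\<in>A. 1 \<le> n \<and> real n \<le> X}. floor_log x = y}"
  have sub: "?B \<subseteq> {n\<in>A. 1 \<le> n \<and> real n \<le> 2^(y+1)}"
  proof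
    fix x assume x: "x \<in> ?B"
    have "x < 2 * 2 ^ floor_log x" by (rule floor_log_exp2_gt)
    hence "x < 2^(y+1)" using x by auto
    hence "real x < real (2^(y+1))" by linarith
    hence "real x \<le> 2^(y+1)" by simp
    then show "x \<in> {n\<in>A. 1 \<le> n \<and> real n \<le> 2^(y+1)}" using x by auto
  qed
  have "(\<Sum>a\<in>?B. 1 / sqrt (real a)) \<le> real (card ?B) * (1 / sqrt (2^y))"
  proof (rule sum_bounded_above)
    fix a assume a: "a \<in> ?B"
    hence "a > 0" by auto
    hence "2 ^ floor_log a \<le> a" by (rule floor_log_exp2_le)
    hence "(2::real)^y \<le> real a" using a
      by (metis (mono_tags, lifting) mem_Collect_eq numeral_power_le_of_nat_cancel_iff)
    then show "1 / sqrt (real a) \<le> 1 / sqrt (2^y)"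
      using \<open>a > 0\<close> by (intro divide_left_mono) auto
  qed
  also have "\<dots> \<le> real (count_upto A (2^(y+1))) * (1 / sqrt (2^y))"
    unfolding count_upto_def
    apply (rule mult_right_mono)
    using card_mono[OF finite_upto sub] by auto
  finally show ?thesis by simp
qed


lemma h_bound:
  fixes \<alpha> C X0 :: real
  assumes C: "C > 0" and X0: "\<forall>Y\<ge>X0. real (count_upto A Y) \<le> C * sqrt Y / (ln Y) powr \<alpha>"
  shows "\<exists>E\<ge>0. \<forall>y::nat. real (count_upto A (2^(y+1))) / sqrt (2^y) \<le> E * real (y+1) powr (-\<alpha>)"
proof -
  define h where "h y = real (count_upto A (2^(y+1))) / sqrt (2^y)" for y :: nat
  define y0 where "y0 = nat \<lceil>X0\<rceil>"
  define E1 where "E1 = C * sqrt 2 * ln 2 powr (-\<alpha>)"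
  define E2 where "E2 = Max ((\<lambda>y. h y / real (y+1) powr (-\<alpha>)) ` {..y0})"
  have big: "h y \<le> E1 * real (y+1) powr (-\<alpha>)" if "y \<ge> y0" for y
  proof -
    have "real y0 < 2 ^ y0" using less_exp[of y0] by (metis of_nat_less_numeral_power_cancel_iff)
    also have "(2::real) ^ y0 \<le> 2 ^ y" using that by (simp add: power_increasing)
    also have "\<dots> \<le> 2^(y+1)" by simp
    finally have "X0 \<le> 2^(y+1)" unfolding y0_def by linarith
    hence "real (count_upto A (2^(y+1))) \<le> C * sqrt (2^(y+1)) / (ln (2^(y+1))) powr \<alpha>"
      using X0 by auto
    also have "ln ((2::real)^(y+1)) = real (y+1) * ln 2" using ln_realpow[of 2 "y+1"] by (simp del: power_Suc)
    also have "(real (y+1) * ln 2) powr \<alpha> = real (y+1) powr \<alpha> * ln 2 powr \<alpha>"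
      by (simp add: powr_mult)
    finally have "h y \<le> C * sqrt (2^(y+1)) / (real (y+1) powr \<alpha> * ln 2 powr \<alpha>) / sqrt (2^y)"
      unfolding h_def by (rule divide_right_mono) auto
    also have "\<dots> = C * sqrt 2 * (real (y+1) powr (-\<alpha>) * ln 2 powr (-\<alpha>))"
      by (simp add: real_sqrt_mult powr_minus_divide field_simps)
    finally show ?thesis unfolding E1_def by (simp add: mult_ac)
  qed
  have small: "h y \<le> E2 * real (y+1) powr (-\<alpha>)" if "y \<le> y0" for y
  proof -
    have "h y / real (y+1) powr (-\<alpha>) \<le> E2" unfolding E2_def
      by (rule Max_ge) (use that in auto)
    then show ?thesis by (simp add: divide_le_eq)
  qed
  have E2nn: "E2 \<ge> 0"
  proof -
    have "h 0 / real (0+1) powr (-\<alpha>) \<le> E2" unfolding E2_def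
      by (rule Max_ge) (auto intro!: image_eqI[of _ _ 0])
    moreover have "h 0 \<ge> 0" unfolding h_def by simp
    ultimately show ?thesis by simp
  qed
  show ?thesis
  proof (intro exI[of _ "max E1 E2"] conjI allI)
    show "max E1 E2 \<ge> 0" using E2nn by simp
    fix y :: nat
    have "h y \<le> max E1 E2 * real (y+1) powr (-\<alpha>)"
    proof (cases "y \<le> y0")
      case True
      then show ?thesis using small[OF True] by (meson max.cobounded2 mult_right_mono order_trans powr_ge_zero)
    next
      case False
      then show ?thesis using big[of y] by (meson max.cobounded1 mult_right_mono order_trans powr_ge_zero nat_le_linear)
    qed
    then show "real (count_upto A (2^(y+1))) / sqrt (2^y) \<le> max E1 E2 * real (y+1) powr (-\<alpha>)"
      unfolding h_def .
  qed
qed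


lemma S_bound:
  fixes \<alpha> C X0 :: real
  assumes a1: "\<alpha> < 1" and A0: "0 \<notin> A" and C: "C > 0"
    and X0: "\<forall>Y\<ge>X0. real (count_upto A Y) \<le> C * sqrt Y / (ln Y) powr \<alpha>"
  shows "\<exists>D>0. \<forall>X\<ge>2. (\<Sum>a\<in>{n\<in>A. 1 \<le> n \<and> real n \<le> X}. 1 / sqrt (real a)) \<le> D * ln X powr (1-\<alpha>)"
proof -
  obtain E where E: "E \<ge> 0" "\<forall>y::nat. real (count_upto A (2^(y+1))) / sqrt (2^y) \<le> E * real (y+1) powr (-\<alpha>)"
    using h_bound[OF C X0] by blast
  obtain c where c: "c > 0" "\<forall>J. (\<Sum>i<J. real (i+1) powr (-\<alpha>)) \<le> c * real J powr (1-\<alpha>)"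
    using powr_sum_bound[OF a1] by blast
  define D where "D = E * c * (2 / ln 2) powr (1-\<alpha>) + 1"
  have Dpos: "D > 0" unfolding D_def using E c
    by (intro add_nonneg_pos mult_nonneg_nonneg) auto
  show ?thesis
  proof (intro exI[of _ D] conjI allI impI Dpos)
    fix X :: real assume X2: "X \<ge> 2"
    define F where "F = {n\<in>A. 1 \<le> n \<and> real n \<le> X}"
    define N where "N = nat \<lfloor>X\<rfloor>"
    define L where "L = Suc (floor_log N)"
    have fF: "finite F" unfolding F_def by (rule finite_upto)
    have img: "floor_log ` F \<subseteq> {..<L}"
    proof
      fix z assume "z \<in> floor_log ` F"
      then obtain a where a: "a \<in> F" "z = floor_log a" by auto
      have "a \<le> N" using a unfolding F_def N_def by (auto simp: le_nat_floor)
      hence "floor_log a \<le> floor_log N" by (rule floor_log_le_iff)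
      then show "z \<in> {..<L}" using a unfolding L_def by auto
    qed
    have "(\<Sum>a\<in>F. 1 / sqrt (real a)) = (\<Sum>y<L. \<Sum>a\<in>{x\<in>F. floor_log x = y}. 1 / sqrt (real a))"
      using sum.group[OF fF _ img, of "\<lambda>a. 1 / sqrt (real a)"] by simp
    also have "\<dots> \<le> (\<Sum>y<L. E * real (y+1) powr (-\<alpha>))"
      apply (rule sum_mono)
      using inner_bound[OF A0, of X] E(2) unfolding F_def by (meson order_trans)
    also have "\<dots> = E * (\<Sum>y<L. real (y+1) powr (-\<alpha>))" by (simp add: sum_distrib_left)
    also have "\<dots> \<le> E * (c * real L powr (1-\<alpha>))"
      using c E by (intro mult_left_mono) auto
    finally have st1: "(\<Sum>a\<in>F. 1 / sqrt (real a)) \<le> E * (c * real L powr (1-\<alpha>))" .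
    have "real L powr (1-\<alpha>) \<le> ((2 / ln 2) * ln X) powr (1-\<alpha>)"
    proof (rule powr_mono2)
      show "0 \<le> 1 - \<alpha>" using a1 by simp
      show "0 \<le> real L" by simp
      have Npos: "N > 0" unfolding N_def using X2 by linarith
      have "real (2 ^ floor_log N) \<le> real N" using floor_log_exp2_le[OF Npos] by linarith
      also have "real N \<le> X" unfolding N_def using X2 by linarith
      finally have "(2::real) ^ floor_log N \<le> X" by simp
      hence "ln ((2::real) ^ floor_log N) \<le> ln X" using X2 by (subst ln_le_cancel_iff) auto
      hence l1: "real (floor_log N) * ln 2 \<le> ln X" by (simp add: ln_realpow)
      have l2: "ln 2 \<le> ln X" using X2 by (subst ln_le_cancel_iff) auto
      have ln2: "ln (2::real) > 0" by simp
      have "real L * ln 2 \<le> 2 * ln X" unfolding L_def using l1 l2 by (simp add: algebra_simps)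
      then show "real L \<le> (2 / ln 2) * ln X" using ln2 by (simp add: field_simps)
    qed
    also have "((2 / ln 2) * ln X) powr (1-\<alpha>) = (2 / ln 2) powr (1-\<alpha>) * ln X powr (1-\<alpha>)"
      using X2 by (intro powr_mult; simp)
    finally have "E * (c * real L powr (1-\<alpha>)) \<le> E * (c * ((2 / ln 2) powr (1-\<alpha>) * ln X powr (1-\<alpha>)))"
      using E c by (intro mult_left_mono) auto
    with st1 have "(\<Sum>a\<in>F. 1 / sqrt (real a)) \<le> E * c * (2 / ln 2) powr (1-\<alpha>) * ln X powr (1-\<alpha>)"
      by (simp add: mult_ac)
    also have "\<dots> \<le> D * ln X powr (1-\<alpha>)" unfolding D_def
      by (intro mult_right_mono) auto
    finally show "(\<Sum>a\<in>{n\<in>A. 1 \<le> n \<and> real n \<le> X}. 1 / sqrt (real a)) \<le> D * ln X powr (1-\<alpha>)"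
      unfolding F_def .
  qed
qed


lemma set_pow_nz: "0 \<notin> A \<Longrightarrow> 0 \<notin> set_pow A j"
proof (induction j)
  case (Suc j)
  then show ?case by (auto simp: set_mult_def) (metis gr0I)+
qed simp

lemma decomp:
  "n \<in> set_pow A (Suc j) \<Longrightarrow> \<exists>a\<in>A. \<exists>m\<in>set_pow A j. n = a * m \<and> m \<le> a ^ j"
proof (induction j arbitrary: n)
  case 0
  then show ?case by (auto simp: set_mult_def)
next
  case (Suc j)
  from Suc.prems obtain b n' where b: "b \<in> A" "n' \<in> set_pow A (Suc j)" "n = b * n'"
    by (auto simp: set_mult_def)
  from Suc.IH[OF b(2)] obtain a m where am: "a \<in> A" "m \<in> set_pow A j" "n' = a * m" "m \<le> a ^ j"
    by blast
  show ?case
  proof (cases "b \<le> a")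
    case True
    have "b * m \<in> set_pow A (Suc j)" using b(1) am(2) by (auto simp: set_mult_def)
    moreover have "b * m \<le> a ^ Suc j" using True am(4) by (simp add: mult_le_mono)
    ultimately show ?thesis using am b by (intro bexI[of _ a] bexI[of _ "b*m"]) auto
  next
    case False
    have "a * m \<in> set_pow A (Suc j)" using am(1) am(2) by (auto simp: set_mult_def)
    moreover have "a * m \<le> b ^ Suc j"
    proof -
      have "a * m \<le> a * a ^ j" using am(4) by simp
      also have "\<dots> \<le> b * b ^ j" using False by (intro mult_le_mono power_mono) auto
      finally show ?thesis by simp
    qed
    ultimately show ?thesis using am b by (intro bexI[of _ b] bexI[of _ "a*m"]) auto
  qed
qed

lemma T_bound:
  assumes A0: "0 \<notin> A"
  shows "(\<Sum>m\<in>{n\<in>set_pow A j. 1 \<le> n \<and> real n \<le> X}. 1 / sqrt (real m))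
         \<le> (\<Sum>a\<in>{n\<in>A. 1 \<le> n \<and> real n \<le> X}. 1 / sqrt (real a)) ^ j"
proof (induction j)
  case 0
  show ?case
  proof (cases "X \<ge> 1")
    case True
    then have "{n\<in>set_pow A 0. 1 \<le> n \<and> real n \<le> X} = {1}" by auto
    then show ?thesis by simp
  next
    case False
    then have "{n\<in>set_pow A 0. 1 \<le> n \<and> real n \<le> X} = {}" by force
    then show ?thesis by (simp only:) simp
  qed
next
  case (Suc j)
  define F where "F = {n\<in>A. 1 \<le> n \<and> real n \<le> X}"
  define G where "G = {n\<in>set_pow A j. 1 \<le> n \<and> real n \<le> X}"
  define H where "H = {n\<in>set_pow A (Suc j). 1 \<le> n \<and> real n \<le> X}"
  define f where "f = (\<lambda>m::nat. 1 / sqrt (real m))"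
  have fin: "finite (F \<times> G)" unfolding F_def G_def using finite_upto by blast
  have sub: "H \<subseteq> (\<lambda>(a,m). a*m) ` (F \<times> G)"
  proof
    fix n assume "n \<in> H"
    then obtain a m where am: "a \<in> A" "m \<in> set_pow A j" "n = a * m" "1 \<le> n" "real n \<le> X"
      unfolding H_def by (auto simp: set_mult_def)
    have "a \<noteq> 0" using am A0 by auto
    have "m \<noteq> 0" using am set_pow_nz[OF A0] by metis
    have "a \<le> n" using am \<open>m \<noteq> 0\<close> by simp
    have "m \<le> n" using am \<open>a \<noteq> 0\<close> by simp
    have "(a, m) \<in> F \<times> G" unfolding F_def G_def using am \<open>a \<le> n\<close> \<open>m \<le> n\<close> \<open>a \<noteq> 0\<close> \<open>m \<noteq> 0\<close>
      by (auto intro: order_trans[of _ "real n"])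
    then show "n \<in> (\<lambda>(a,m). a*m) ` (F \<times> G)" using am by force
  qed
  have "sum f H \<le> sum f ((\<lambda>(a,m). a*m) ` (F \<times> G))"
    by (rule sum_mono2) (use fin sub in \<open>auto simp: f_def\<close>)
  also have "\<dots> \<le> sum (f \<circ> (\<lambda>(a,m). a*m)) (F \<times> G)"
    by (rule sum_image_le) (use fin in \<open>auto simp: f_def\<close>)
  also have "\<dots> = (\<Sum>(a,m)\<in>F \<times> G. f a * f m)"
    by (rule sum.cong) (auto simp: f_def real_sqrt_mult)
  also have "\<dots> = sum f F * sum f G"
    by (simp add: sum_product sum.cartesian_product)
  also have "\<dots> \<le> sum f F * sum f F ^ j"
    using Suc.IH unfolding F_def G_def f_def
    by (intro mult_left_mono) (auto intro: sum_nonneg)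
  finally show ?case unfolding F_def H_def f_def by simp
qed


theorem corollary2p3:
  fixes A :: "nat set" and \<alpha> :: real and k :: nat
  assumes "\<alpha> < 1" and "k \<ge> 2" and "0 \<notin> A"
    and "\<exists>C>0. \<forall>\<^sub>F X in at_top.
           real (count_upto A X) \<le> C * sqrt X / (ln X) powr \<alpha>"
  shows "\<exists>C'>0. \<forall>\<^sub>F X in at_top.
           real (count_upto (set_pow A k) X) \<le> C' * sqrt X * (ln X) powr (real k - 1 - real k * \<alpha>)"
proof -
  note a1 = assms(1) and A0 = assms(3)
  obtain C where C: "C > 0" and ev: "\<forall>\<^sub>F X in at_top. real (count_upto A X) \<le> C * sqrt X / (ln X) powr \<alpha>"
    using assms(4) by blast
  obtain X0 where X0: "\<And>Y. Y \<ge> X0 \<Longrightarrow> real (count_upto A Y) \<le> C * sqrt Y / (ln Y) powr \<alpha>"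
    using ev unfolding eventually_at_top_linorder by blast
  define X1 where "X1 = max X0 3"
  have X1: "\<forall>Y\<ge>X1. real (count_upto A Y) \<le> C * sqrt Y / (ln Y) powr \<alpha>"
    using X0 unfolding X1_def by auto
  obtain D where D: "D > 0" "\<forall>X\<ge>2. (\<Sum>a\<in>{n\<in>A. 1 \<le> n \<and> real n \<le> X}. 1 / sqrt (real a)) \<le> D * ln X powr (1-\<alpha>)"
    using S_bound[OF a1 A0 C X1] by blast
  obtain j where kj: "k = Suc j" and j1: "j \<ge> 1" using assms(2) by (cases k) auto
  define K where "K = max 1 (real k powr \<alpha>)"
  have K1: "K \<ge> 1" unfolding K_def by simp
  define C' where "C' = C * K * D ^ j"
  have C'pos: "C' > 0" unfolding C'_def using C D K1 by simp
  have X13: "X1 \<ge> 3" unfolding X1_def by simp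
  show ?thesis
  proof (intro exI[of _ C'] conjI C'pos, unfold eventually_at_top_linorder, intro exI[of _ "X1 ^ k"] allI impI)
    fix X :: real assume Xk: "X \<ge> X1 ^ k"
    have "X1 \<le> X1 ^ k" using X13 assms(2) by (simp add: power_increasing[of 1 k X1, simplified])
    hence XX1: "X \<ge> X1" using Xk by linarith
    hence X3: "X \<ge> 3" using X13 by linarith
    define H where "H = {n\<in>set_pow A k. 1 \<le> n \<and> real n \<le> X}"
    define M where "M = {m\<in>set_pow A j. 1 \<le> m \<and> real m \<le> X \<and> real m ^ k \<le> X ^ j}"
    define P where "P m = {a\<in>A. 1 \<le> a \<and> real a \<le> X / real m}" for m :: nat
    have finM: "finite M" using finite_upto[of "set_pow A j" X] unfolding M_def
      by (rule finite_subset[rotated]) auto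
    have finP: "\<forall>m\<in>M. finite (P m)" unfolding P_def using finite_upto by blast
    have sub: "H \<subseteq> (\<lambda>(a,m). a*m) ` (Sigma M P)"
    proof
      fix n assume "n \<in> H"
      hence n: "n \<in> set_pow A (Suc j)" "1 \<le> n" "real n \<le> X" unfolding H_def kj by auto
      obtain a m where am: "a \<in> A" "m \<in> set_pow A j" "n = a * m" "m \<le> a ^ j"
        using decomp[OF n(1)] by blast
      have "a \<noteq> 0" using am A0 by metis
      have "m \<noteq> 0" using am set_pow_nz[OF A0] by metis
      have "m \<le> n" using am \<open>a \<noteq> 0\<close> by simp
      have "m ^ k \<le> n ^ j"
      proof -
        have "m ^ k = m ^ j * m" using kj by simp
        also have "\<dots> \<le> m ^ j * a ^ j" using am(4) by simp
        also have "\<dots> = n ^ j" using am(3) by (simp add: power_mult_distrib)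
        finally show ?thesis .
      qed
      hence "real m ^ k \<le> real n ^ j" by (metis of_nat_le_iff of_nat_power)
      also have "\<dots> \<le> X ^ j" using n by (intro power_mono) auto
      finally have mk: "real m ^ k \<le> X ^ j" .
      have "real m \<le> real n" using \<open>m \<le> n\<close> by simp
      hence "real m \<le> X" using n(3) by linarith
      have mM: "m \<in> M" unfolding M_def
        using \<open>real m \<le> X\<close> am(2) \<open>m \<noteq> 0\<close> mk by (intro CollectI conjI) auto
      have "real a * real m \<le> X" using n am by simp
      hence "real a \<le> X / real m" using \<open>m \<noteq> 0\<close> by (simp add: field_simps)
      hence "a \<in> P m" unfolding P_def using am \<open>a \<noteq> 0\<close> by auto
      then show "n \<in> (\<lambda>(a,m). a*m) ` (Sigma M P)" using mM am
        by (intro image_eqI[of _ _ "(m,a)"]) auto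
    qed
    have "card H \<le> card ((\<lambda>(a,m). a*m) ` (Sigma M P))"
      by (rule card_mono) (use finM finP sub in auto)
    also have "\<dots> \<le> card (Sigma M P)" by (rule card_image_le) (use finM finP in auto)
    also have "\<dots> = (\<Sum>m\<in>M. card (P m))" by (rule card_SigmaI) (use finM finP in auto)
    finally have "card H \<le> (\<Sum>m\<in>M. card (P m))" .
    hence "real (card H) \<le> (\<Sum>m\<in>M. real (card (P m)))"
      by (simp only: of_nat_sum[symmetric] of_nat_le_iff)
    also have "(\<Sum>m\<in>M. real (card (P m))) = (\<Sum>m\<in>M. real (count_upto A (X / real m)))"
      unfolding P_def count_upto_def by (rule refl)
    finally have cH: "real (card H) \<le> (\<Sum>m\<in>M. real (count_upto A (X / real m)))" .
    define Q where "Q = C * K * sqrt X / ln X powr \<alpha>"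
    have lnX: "ln X > 0" using X3 by simp
    have Qnn: "Q \<ge> 0" unfolding Q_def using C K1 X3
      by (intro divide_nonneg_nonneg mult_nonneg_nonneg) auto
    have per: "real (count_upto A (X / real m)) \<le> Q * (1 / sqrt (real m))" if "m \<in> M" for m
    proof -
      have m: "real m \<ge> 1" "real m \<le> X" "real m ^ k \<le> X ^ j" using that unfolding M_def by auto
      define Y where "Y = X / real m"
      have Ypos: "Y > 0" unfolding Y_def using m X3 by simp
      have YX: "Y \<le> X" unfolding Y_def using m X3 by (simp add: divide_le_eq)
      have Ykd: "Y ^ k = X ^ k / real m ^ k" unfolding Y_def by (simp add: power_divide)
      have dd: "X ^ k / X ^ j \<le> X ^ k / real m ^ k" using m X3 by (intro divide_left_mono) auto
      have xx: "X ^ k / X ^ j = X" using kj X3 by simp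
      have Yk: "Y ^ k \<ge> X" using Ykd dd xx by linarith
      hence "Y ^ k \<ge> X1 ^ k" using Xk by linarith
      hence "Y ^ Suc j \<ge> X1 ^ Suc j" by (simp only: kj)
      hence YX1: "Y \<ge> X1" using Ypos power_le_imp_le_base by fastforce
      have lnY: "ln Y > 0" using YX1 X13 by simp
      have "ln X \<le> ln (Y ^ k)" using Yk X3 by (subst ln_le_cancel_iff) auto
      hence lnXY: "ln X \<le> real k * ln Y" using Ypos by (simp add: ln_realpow)
      have lnYX: "ln Y \<le> ln X" using YX Ypos by simp
      have KK: "ln X powr \<alpha> \<le> K * ln Y powr \<alpha>"
      proof (cases "\<alpha> \<ge> 0")
        case True
        have "ln X powr \<alpha> \<le> (real k * ln Y) powr \<alpha>" using True lnX lnXY by (intro powr_mono2) auto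
        also have "\<dots> = real k powr \<alpha> * ln Y powr \<alpha>" using lnY by (simp add: powr_mult)
        also have "\<dots> \<le> K * ln Y powr \<alpha>" unfolding K_def by (intro mult_right_mono) auto
        finally show ?thesis .
      next
        case False
        have "ln X powr \<alpha> \<le> ln Y powr \<alpha>" using False lnY lnYX by (intro powr_mono2') auto
        also have "\<dots> \<le> K * ln Y powr \<alpha>" using K1 by (simp add: mult_le_cancel_right1)
        finally show ?thesis .
      qed
      have "real (count_upto A Y) \<le> C * sqrt Y / ln Y powr \<alpha>" using X1 YX1 by auto
      also have "\<dots> \<le> C * sqrt Y * K / ln X powr \<alpha>"
      proof -
        have p1: "ln Y powr \<alpha> > 0" "ln X powr \<alpha> > 0" using lnY lnX by auto
        have "C * sqrt Y * ln X powr \<alpha> \<le> C * sqrt Y * (K * ln Y powr \<alpha>)"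
          using KK C Ypos by (intro mult_left_mono) auto
        then show ?thesis using p1 by (simp add: field_simps)
      qed
      also have "\<dots> = Q * (1 / sqrt (real m))" unfolding Q_def Y_def
        by (simp add: real_sqrt_divide field_simps)
      finally show ?thesis unfolding Y_def .
    qed
    have "real (card H) \<le> (\<Sum>m\<in>M. Q * (1 / sqrt (real m)))"
      using cH per sum_mono by (meson order_trans)
    also have "\<dots> = Q * (\<Sum>m\<in>M. 1 / sqrt (real m))" by (simp add: sum_distrib_left)
    also have "\<dots> \<le> Q * (\<Sum>m\<in>{n\<in>set_pow A j. 1 \<le> n \<and> real n \<le> X}. 1 / sqrt (real m))"
      using Qnn
      by (intro mult_left_mono sum_mono2 finite_upto) (auto simp: M_def)
    also have "\<dots> \<le> Q * (\<Sum>a\<in>{n\<in>A. 1 \<le> n \<and> real n \<le> X}. 1 / sqrt (real a)) ^ j"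
      using Qnn T_bound[OF A0, of j X]
      by (intro mult_left_mono) auto
    also have "\<dots> \<le> Q * (D * ln X powr (1-\<alpha>)) ^ j"
      using Qnn D X3
      by (intro mult_left_mono power_mono) (auto intro: sum_nonneg)
    also have "\<dots> = C' * sqrt X * ln X powr (real k - 1 - real k * \<alpha>)"
    proof -
      have e0: "(ln X powr (1-\<alpha>)) ^ j = ln X powr ((1-\<alpha>) * real j)"
        using lnX by (simp add: powr_realpow[symmetric] powr_powr)
      have e1: "(D * ln X powr (1-\<alpha>)) ^ j = D ^ j * ln X powr ((1-\<alpha>) * real j)"
        by (simp only: power_mult_distrib e0)
      have e2: "ln X powr ((1-\<alpha>) * real j) / ln X powr \<alpha> = ln X powr (real k - 1 - real k * \<alpha>)"
      proof -
        have "(1-\<alpha>) * real j - \<alpha> = real k - 1 - real k * \<alpha>" using kj by (simp add: algebra_simps)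
        then show ?thesis by (simp add: powr_diff[symmetric])
      qed
      have "Q * (D * ln X powr (1-\<alpha>)) ^ j = (C * K * D ^ j) * sqrt X * (ln X powr ((1-\<alpha>) * real j) / ln X powr \<alpha>)"
        unfolding Q_def e1 by (simp only: divide_inverse mult_ac)
      also have "\<dots> = C' * sqrt X * ln X powr (real k - 1 - real k * \<alpha>)"
        unfolding C'_def e2 ..
      finally show ?thesis .
    qed
    finally show "real (count_upto (set_pow A k) X) \<le> C' * sqrt X * ln X powr (real k - 1 - real k * \<alpha>)"
      unfolding count_upto_def H_def .
  qed
qed

end
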